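(* Let $E=\begin{pmatrix}1&0\\0&z\end{pmatrix}$, $U=\begin{pmatrix}x&z\\1&0\end{pmatrix}$ and $P=UE$, matrices over $\mathrm{GF}(2)[x,z]$, acting on row vectors from the right. Then (i) for $n\ge0$, $(f^{(n+1)},g^{(n+1)})=(f^{(n)},g^{(n)})M_n$ where $M_n=E$ if $n$ is even and $M_n=U$ if $n$ is odd; (ii) for $i\ge1$, $$(f^{(2i)},g^{(2i)})=(x+z,z^2)\,P^{i-1}U\quad\text{and}\quad (f^{(2i+1)},g^{(2i+1)})=(x+z,z^2)\,P^{i}.$$
   Context: $\mathbb{F}=\mathrm{GF}(2)$, $R=\mathbb{F}[x,z]$, $|\cdot|$ is total degree. Let $(r_0,r_1,\ldots)$ be the binary sequence with $r_i=1$ if $i=2^j-1$ for some $j\ge 0$ and $r_i=0$ otherwise. For $n\ge1$ its inverse form is $R^{(1-n)}=\sum_{j=1-n}^{0}r_{-j}\,x^{j}z^{1-n-j}\in\mathbb{F}[x^{-1},z^{-1}]$. For a form $f\in R$ and such a form $G$, $\Delta(f;G)$ is the coefficient of $x^{|f|+|G|}z^0$ in $f\cdot G$ computed in $\mathbb{F}[x^{\pm1},z^{\pm1}]$ if $|f|+|G|\le 0$, and $0$ otherwise. Define forms recursively: $(f^{(0)},g^{(0)})=(x+z,z)$; for $k\ge0$ let $d_k=|g^{(k)}|-|f^{(k)}|$ and $\Delta_k=\Delta(f^{(k)};R^{(-1-k)})$, and set $(f^{(k+1)},g^{(k+1)})=(f^{(k)},zg^{(k)})$ if $\Delta_k=0$;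 $=(f^{(k)}+x^{-d_k}g^{(k)},\,zg^{(k)})$ if $\Delta_k=1$ and $d_k\le0$; $=(x^{d_k}f^{(k)}+g^{(k)},\,zf^{(k)})$ if $\Delta_k=1$ and $d_k>0$. *)

theory Defs
  imports "HOL-Computational_Algebra.Polynomial" "HOL-Library.Z2"
begin

text \<open>Bivariate polynomials over GF(2) = bit, represented as polynomials in z whose
  coefficients are polynomials in x:  p = \<Sum>_b (coeff p b)(x) z^b.\<close>

type_synonym form = "bit poly poly"

definition mcoeff :: "form \<Rightarrow> nat \<Rightarrow> nat \<Rightarrow> bit" where
  "mcoeff p a b = coeff (coeff p b) a"

definition Xf :: form where "Xf = [:[:0, 1:]:]"
definition Zf :: form where "Zf = [:0, 1:]"

definition tdeg :: "form \<Rightarrow> nat" where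
  "tdeg p = (if p = 0 then 0 else Max {a + b | a b. mcoeff p a b \<noteq> 0})"

definition rseq :: "nat \<Rightarrow> bit" where
  "rseq i = (if \<exists>j. i = 2 ^ j - 1 then 1 else 0)"

text \<open>Delta(f; R^(1-n)): coefficient of x^(|f|+|G|) z^0 in f * R^(1-n), where
  R^(1-n) = sum_{j=1-n}^{0} r_(-j) x^j z^(1-n-j), |G| = 1-n; written out explicitly:
  the monomial x^a z^b of f contributes with x^j z^(1-n-j) iff b+1-n-j=0 and
  a+j = |f|+1-n.\<close>
definition Delta :: "form \<Rightarrow> nat \<Rightarrow> bit" where
  "Delta f n = (if int (tdeg f) + (1 - int n) \<le> 0 then
     (\<Sum>j\<in>{1 - int n..0}.
        (if int (tdeg f) + (1 - int n) - j \<ge> 0 \<and> int n - 1 + j \<ge> 0 then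
           rseq (nat (- j)) * mcoeff f (nat (int (tdeg f) + (1 - int n) - j)) (nat (int n - 1 + j))
         else 0))
   else 0)"

definition xpow :: "nat \<Rightarrow> form \<Rightarrow> form" where
  "xpow m f = smult (monom 1 m) f"

definition step :: "nat \<Rightarrow> form \<times> form \<Rightarrow> form \<times> form" where
  "step k fg = (let f = fst fg; g = snd fg; d = int (tdeg g) - int (tdeg f) in
     if Delta f (k + 2) = 0 then (f, Zf * g)
     else if d \<le> 0 then (f + xpow (nat (- d)) g, Zf * g)
     else (xpow (nat d) f + g, Zf * f))"
  \<comment> \<open>Delta_k = Delta(f^(k); R^(-1-k)) = Delta f (k+2) since 1-(k+2) = -1-k\<close>

fun FG :: "nat \<Rightarrow> form \<times> form" where
  "FG 0 = (Xf + Zf, Zf)"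
| "FG (Suc k) = step k (FG k)"

text \<open>2x2 matrices (a,b,c,d) = [[a,b],[c,d]], acting on row vectors from the right.\<close>
type_synonym mat2 = "form \<times> form \<times> form \<times> form"

definition vmul :: "form \<times> form \<Rightarrow> mat2 \<Rightarrow> form \<times> form" where
  "vmul v M = (case v of (f, g) \<Rightarrow> case M of (a, b, c, d) \<Rightarrow> (f * a + g * c, f * b + g * d))"

definition mmul :: "mat2 \<Rightarrow> mat2 \<Rightarrow> mat2" where
  "mmul M N = (case M of (a, b, c, d) \<Rightarrow> case N of (a', b', c', d') \<Rightarrow>
     (a * a' + b * c', a * b' + b * d', c * a' + d * c', c * b' + d * d'))"

definition mid :: mat2 where "mid = (1, 0, 0, 1)"

fun mpow :: "mat2 \<Rightarrow> nat \<Rightarrow> mat2" where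
  "mpow M 0 = mid"
| "mpow M (Suc n) = mmul (mpow M n) M"

definition Emat :: mat2 where "Emat = (1, 0, 0, Zf)"
definition Umat :: mat2 where "Umat = (Xf, Zf, 1, 0)"
definition Pmat :: mat2 where "Pmat = mmul Umat Emat"

end

theory Submission imports Defs "HOL-Computational_Algebra.Formal_Power_Series" begin

lemma bit_add_self: "(b::bit) + b = 0" by simp
lemma bit_sq: "(b::bit) * b = b" by (cases b) auto
declare add_bit_eq_xor[simp del] mult_bit_eq_and[simp del]

lemma rseq_0: "rseq 0 = 1"
  unfolding rseq_def by (auto intro: exI[of _ 0])

lemma rseq_odd: "rseq (2*s+1) = rseq s"
proof -
  have "(\<exists>j. 2*s+1 = 2^j - 1) \<longleftrightarrow> (\<exists>j. s = 2^j - 1)"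
  proof
    assume "\<exists>j. 2*s+1 = 2^j - 1"
    then obtain j where j: "2*s+1 = 2^j - 1" by blast
    then have "j \<noteq> 0" by (cases j) auto
    then obtain i where "j = Suc i" by (cases j) auto
    with j have "s = 2^i - 1" by (simp; linarith)
    then show "\<exists>j. s = 2^j - 1" by blast
  next
    assume "\<exists>j. s = 2^j - 1"
    then obtain j where j: "s = 2^j - 1" by blast
    have "(1::nat) \<le> 2^j" by simp
    with j have "2*s+1 = 2*2^j - 1" by linarith
    then have "2*s+1 = 2^(Suc j) - 1" by simp
    then show "\<exists>j. 2*s+1 = 2^j - 1" by blast
  qed
  then show ?thesis unfolding rseq_def by simp
qed

lemma rseq_even: "rseq (2*s+2) = 0"
proof -
  have "\<not> (\<exists>j. 2*s+2 = (2::nat)^j - 1)"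
  proof
    assume "\<exists>j. 2*s+2 = (2::nat)^j - 1"
    then obtain j where j: "2*s+2 = (2::nat)^j - 1" by blast
    then have "j \<noteq> 0" by (cases j) auto
    then obtain i where "j = Suc i" by (cases j) auto
    with j have "2*s+2 = 2*2^i - (1::nat)" by simp
    then show False by presburger
  qed
  then show ?thesis unfolding rseq_def by simp
qed

lemma pair_sum_bit:
  fixes f :: "nat \<Rightarrow> bit"
  shows "(\<Sum>i=0..m. f i * f (m-i)) = (if even m then f (m div 2) else 0)"
proof -
  have rev: "(\<Sum>i\<in>{h+1..m}. f i * f (m-i)) = (\<Sum>i\<in>{0..m-h-1}. f i * f (m-i))" if "h < m" for h
    by (rule sum.reindex_bij_witness[of _ "\<lambda>j. m - j" "\<lambda>i. m - i"]) (use that in \<open>auto simp: mult.commute\<close>)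
  show ?thesis
  proof (cases "even m")
    case True
    then obtain h where m: "m = 2*h" by blast
    show ?thesis
    proof (cases "h = 0")
      case True then show ?thesis using m by (simp add: bit_sq)
    next
      case False
      have split: "{0..m} = {0..h-1} \<union> {h} \<union> {h+1..m}" using False m by auto
      have "(\<Sum>i=0..m. f i * f (m-i)) = (\<Sum>i\<in>{0..h-1}. f i * f (m-i)) + f h * f (m-h) + (\<Sum>i\<in>{h+1..m}. f i * f (m-i))"
        unfolding split using False m
        by (subst sum.union_disjoint, auto)+
      also have "(\<Sum>i\<in>{h+1..m}. f i * f (m-i)) = (\<Sum>i\<in>{0..h-1}. f i * f (m-i))"
        using rev[of h] False m by (simp add: numeral_2_eq_2)
      finally have e: "(\<Sum>i=0..m. f i * f (m-i)) = (\<Sum>i\<in>{0..h-1}. f i * f (m-i)) + f h * f (m-h) + (\<Sum>i\<in>{0..h-1}. f i * f (m-i))" .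
      have t: "(S::bit) + a + S = a" for S a by (cases S; cases a) simp_all
      show ?thesis unfolding e t using m True by (simp add: bit_sq)
    qed
  next
    case False
    then obtain h where m: "m = 2*h+1" using oddE by blast
    have split: "{0..m} = {0..h} \<union> {h+1..m}" using m by auto
    have "(\<Sum>i=0..m. f i * f (m-i)) = (\<Sum>i\<in>{0..h}. f i * f (m-i)) + (\<Sum>i\<in>{h+1..m}. f i * f (m-i))"
      unfolding split by (subst sum.union_disjoint, auto)
    also have "(\<Sum>i\<in>{h+1..m}. f i * f (m-i)) = (\<Sum>i\<in>{0..h}. f i * f (m-i))"
      using rev[of h] m by simp
    finally have e: "(\<Sum>i=0..m. f i * f (m-i)) = (\<Sum>i\<in>{0..h}. f i * f (m-i)) + (\<Sum>i\<in>{0..h}. f i * f (m-i))" .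
    show ?thesis unfolding e using False by (simp only: bit_add_self if_False)
  qed
qed

definition Rf :: "bit fps" where "Rf = Abs_fps rseq"

lemma Rf_eq: "Rf = 1 + fps_X * Rf^2"
proof (rule fps_ext)
  fix n
  show "fps_nth Rf n = fps_nth (1 + fps_X * Rf^2) n"
  proof (cases n)
    case 0 then show ?thesis by (simp add: Rf_def rseq_0)
  next
    case (Suc m)
    have sq: "fps_nth (Rf^2) m = (if even m then rseq (m div 2) else 0)"
      using pair_sum_bit[of rseq m] by (simp add: power2_eq_square fps_mult_nth Rf_def)
    show ?thesis
    proof (cases "even m")
      case True
      then obtain s where "m = 2*s" by blast
      then show ?thesis using Suc sq rseq_odd[of s] by (simp add: Rf_def)
    next
      case False
      then obtain s where "m = 2*s+1" using oddE by blast
      then show ?thesis using Suc sq rseq_even[of s] by (simp add: Rf_def)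
    qed
  qed
qed


lemma Rf0: "fps_nth Rf 0 = 1" by (simp add: Rf_def rseq_0)
lemma Rf1: "fps_nth Rf 1 = 1" using rseq_odd[of 0] by (simp add: Rf_def rseq_0)
lemma Rf_nz: "Rf \<noteq> 0" using Rf0 by auto

lemma two_fps: "(2::bit fps) = 0"
  by (metis bit_2_eq_0 fps_const_0_eq_0 numeral_fps_const)

lemma minus_one_fps: "(-1::bit fps) = 1"
proof -
  have "(1::bit fps) + 1 = 0" using two_fps by (simp add: one_add_one)
  then show ?thesis by (metis add_eq_0_iff)
qed

definition Wf :: "bit fps" where "Wf = Rf + fps_shift 1 Rf"
definition nu :: "bit fps" where "nu = fps_shift 1 (Wf * inverse Rf)"

lemma XnuR: "fps_X * nu * Rf = Wf"
proof -
  let ?G = "Wf * inverse Rf"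
  have G0: "fps_nth ?G 0 = 0" using Rf0 Rf1 by (simp add: Wf_def)
  have "fps_X * nu = ?G"
    unfolding nu_def by (rule fps_ext) (use G0 in auto)
  then have "fps_X * nu * Rf = Wf * (inverse Rf * Rf)" by (simp add: mult.assoc)
  also have "inverse Rf * Rf = 1" using Rf0 by (intro inverse_mult_eq_1) simp
  finally show ?thesis by simp
qed

lemma XW: "fps_X * Wf = fps_X * Rf + Rf - 1"
proof (rule fps_ext)
  fix n show "fps_nth (fps_X * Wf) n = fps_nth (fps_X * Rf + Rf - 1) n"
    by (cases n) (simp_all add: Wf_def Rf0 Rf_def rseq_0)
qed

lemma nu_eq: "nu = 1 + fps_X^2 * nu^2"
proof -
  define X :: "bit fps" where "X = fps_X"
  define R where "R = Rf"
  have E3: "R = 1 + X * R^2" using Rf_eq by (simp add: X_def R_def)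
  have EW: "X * Wf = X * R + R - 1" using XW by (simp add: X_def R_def)
  have EN: "X * nu * R = Wf" using XnuR by (simp add: X_def R_def)
  have diff: "R * (X*R + R - 1) - (X^2*R^2 + (X*R + R - 1)^2) = -(X*R^2 + 1 - R) + 2*(X*R - X^2*R^2)"
    by algebra
  have "X*R^2 + 1 - R = 0" using E3 by (simp add: algebra_simps)
  then have h: "R * (X*R + R - 1) = X^2*R^2 + (X*R + R - 1)^2" using diff two_fps by simp
  have "(X^2*R^2) * nu = X * R * (X * nu * R)" by (simp add: power2_eq_square algebra_simps)
  also have "\<dots> = R * (X * Wf)" using EN by (simp add: algebra_simps)
  also have "\<dots> = X^2*R^2 + (X * Wf)^2" using h EW by simp
  also have "\<dots> = (X^2*R^2) * (1 + X^2 * nu^2)" unfolding EN[symmetric] by (simp add: power2_eq_square algebra_simps)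
  finally have "(X^2*R^2) * nu = (X^2*R^2) * (1 + X^2 * nu^2)" .
  moreover have "X^2*R^2 \<noteq> 0" using Rf_nz by (simp add: X_def R_def)
  ultimately show ?thesis by (simp add: X_def)
qed

lemma nu0: "fps_nth nu 0 = 1"
proof -
  have "fps_nth nu 0 = fps_nth (1 + fps_X^2 * nu^2) 0" using nu_eq by simp
  also have "\<dots> = 1" by (simp add: fps_X_power_mult_nth)
  finally show ?thesis .
qed

fun D :: "nat \<Rightarrow> bit poly" where
  "D 0 = 1"
| "D (Suc 0) = [:1, 1:]"
| "D (Suc (Suc n)) = pCons 0 (D (Suc n)) + D n"

lemma D_high: "n < a \<Longrightarrow> coeff (D n) a = 0"
proof (induction n arbitrary: a rule: D.induct)
  case 1 then show ?case by (simp add: coeff_1)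
next
  case 2 then show ?case by (cases a) (auto simp: coeff_pCons split: nat.split)
next
  case (3 n) then show ?case by (cases a) (auto simp: coeff_pCons)
qed

lemma D_lead: "coeff (D n) n = 1"
  by (induction n rule: D.induct) (simp_all add: D_high)

definition V :: "nat \<Rightarrow> nat \<Rightarrow> bit" where
  "V n s = (\<Sum>a\<le>n. coeff (D n) a * rseq (a + s))"

lemma V_rec: "V (Suc (Suc n)) s = V (Suc n) (Suc s) + V n s"
proof -
  have "V (Suc (Suc n)) s = (\<Sum>a\<le>Suc (Suc n). coeff (pCons 0 (D (Suc n))) a * rseq (a + s))
       + (\<Sum>a\<le>Suc (Suc n). coeff (D n) a * rseq (a + s))"
    by (simp add: V_def distrib_right sum.distrib)
  also have "(\<Sum>a\<le>Suc (Suc n). coeff (pCons 0 (D (Suc n))) a * rseq (a + s)) = V (Suc n) (Suc s)"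
    unfolding V_def by (subst sum.atMost_Suc_shift) simp
  also have "(\<Sum>a\<le>Suc (Suc n). coeff (D n) a * rseq (a + s)) = V n s"
    unfolding V_def by (simp add: D_high)
  finally show ?thesis .
qed

lemma QV: "Abs_fps (V n) = fps_X^n * nu^n * Rf"
proof (induction n rule: D.induct)
  case 1 then show ?case by (simp add: V_def Rf_def)
next
  case 2
  have "Abs_fps (V 1) = Wf"
    by (rule fps_ext) (simp add: V_def Wf_def Rf_def)
  then show ?case using XnuR by simp
next
  case (3 n)
  have "Abs_fps (V (Suc (Suc n))) = fps_shift 1 (Abs_fps (V (Suc n))) + Abs_fps (V n)"
    by (rule fps_ext) (simp add: V_rec)
  also have "fps_shift 1 (Abs_fps (V (Suc n))) + Abs_fps (V n) = fps_X^n * nu^(Suc n) * Rf + fps_X^n * nu^n * Rf"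
  proof -
    have "Abs_fps (V (Suc n)) = (fps_X^n * nu^(Suc n) * Rf) * fps_X"
      using 3(1) by (simp add: algebra_simps)
    then show ?thesis using 3(2) by (simp only: fps_shift_times_fps_X')
  qed
  also have "fps_X^n * nu^(Suc n) * Rf + fps_X^n * nu^n * Rf = fps_X^n * nu^n * Rf * (nu + 1)"
    by (simp add: algebra_simps)
  also have "nu + 1 = fps_X^2 * nu^2"
  proof -
    have "nu + 1 = nu - 1" using minus_one_fps by (metis diff_minus_eq_add)
    then show ?thesis using nu_eq by (metis add_diff_cancel_left')
  qed
  finally show ?case using 3 by (simp add: power2_eq_square algebra_simps)
qed

lemma V_val: "V n s = (if s < n then 0 else fps_nth (nu^n * Rf) (s - n))"
proof -
  have "V n s = fps_nth (Abs_fps (V n)) s" by simp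
  also have "\<dots> = fps_nth (fps_X^n * (nu^n * Rf)) s" unfolding QV by (simp add: mult.assoc)
  finally show ?thesis by (simp add: fps_X_power_mult_nth)
qed

lemma V_below: "s < n \<Longrightarrow> V n s = 0" by (simp add: V_val)
lemma V_diag: "V n n = 1" by (simp add: V_val Rf0 nu0 fps_nth_power_0)


lemma mcoeff_add: "mcoeff (p + q) a b = mcoeff p a b + mcoeff q a b"
  by (simp add: mcoeff_def)

lemma mcoeff_0: "mcoeff 0 a b = 0" by (simp add: mcoeff_def)

lemma mcoeff_Xmul: "mcoeff (Xf * p) a b = (if a = 0 then 0 else mcoeff p (a - 1) b)"
  by (cases a) (simp_all add: mcoeff_def Xf_def coeff_pCons)

lemma mcoeff_Zmul: "mcoeff (Zf * p) a b = (if b = 0 then 0 else mcoeff p a (b - 1))"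
  by (cases b) (simp_all add: mcoeff_def Zf_def coeff_pCons)

lemma mcoeff_1: "mcoeff 1 a b = (if a = 0 \<and> b = 0 then 1 else 0)"
  by (simp add: mcoeff_def coeff_1)

lemma mcoeff_Xf: "mcoeff Xf a b = (if a = 1 \<and> b = 0 then 1 else 0)"
  using mcoeff_Xmul[of 1 a b] by (simp add: mcoeff_1)

lemma mcoeff_Zf: "mcoeff Zf a b = (if a = 0 \<and> b = 1 then 1 else 0)"
  using mcoeff_Zmul[of 1 a b] by (simp add: mcoeff_1)

fun F :: "nat \<Rightarrow> form" where
  "F 0 = 1"
| "F (Suc 0) = Xf + Zf"
| "F (Suc (Suc n)) = Xf * F (Suc n) + Zf * (Zf * F n)"

lemma F_coeff: "mcoeff (F n) a b = (if a + b = n then coeff (D n) a else 0)"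
proof (induction n arbitrary: a b rule: F.induct)
  case 1 then show ?case by (simp add: mcoeff_1 coeff_1)
next
  case 2 then show ?case
    by (auto simp: mcoeff_add mcoeff_Xf mcoeff_Zf coeff_pCons split: nat.split)
next
  case (3 n)
  show ?case
  proof (cases "a + b = Suc (Suc n)")
    case True
    show ?thesis
    proof (cases "b \<ge> 2")
      case b: True
      then show ?thesis using True 3
        by (cases a) (auto simp: mcoeff_add mcoeff_Xmul mcoeff_Zmul coeff_pCons)
    next
      case b: False
      then have "n < a" using True by simp
      then have "coeff (D n) a = 0" by (rule D_high)
      then show ?thesis using True b 3
        by (cases a) (auto simp: mcoeff_add mcoeff_Xmul mcoeff_Zmul coeff_pCons)
    qed
  next
    case False
    then show ?thesis using 3
      by (auto simp: mcoeff_add mcoeff_Xmul mcoeff_Zmul)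
  qed
qed

lemma tdeg_hom:
  assumes hom: "\<And>a b. mcoeff p a b \<noteq> 0 \<Longrightarrow> a + b = m"
    and nz: "mcoeff p aa bb \<noteq> 0" and s: "aa + bb = m"
  shows "tdeg p = m"
proof -
  have "p \<noteq> 0" using nz by (auto simp: mcoeff_0)
  moreover have "{a + b | a b. mcoeff p a b \<noteq> 0} = {m}"
    using hom nz s by blast
  ultimately show ?thesis by (simp add: tdeg_def)
qed

lemma tdeg_F: "tdeg (F n) = n"
  by (rule tdeg_hom[where aa = n and bb = 0]) (auto simp: F_coeff D_lead split: if_splits)

lemma tdeg_ZZF: "tdeg (Zf * (Zf * F n)) = n + 2"
  by (rule tdeg_hom[where aa = n and bb = 2]) (auto simp: mcoeff_Zmul F_coeff D_lead split: if_splits)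

lemma Delta_hom:
  assumes hom: "\<And>a b. mcoeff p a b \<noteq> 0 \<Longrightarrow> a + b = m"
    and td: "tdeg p = m" and mk: "m \<le> k + 1"
  shows "Delta p (k + 2) = (\<Sum>a\<le>m. mcoeff p a (m - a) * rseq (a + (k + 1 - m)))"
proof -
  define g where "g j = (if int m + (1 - int (k+2)) - j \<ge> 0 \<and> int (k+2) - 1 + j \<ge> 0 then
           rseq (nat (- j)) * mcoeff p (nat (int m + (1 - int (k+2)) - j)) (nat (int (k+2) - 1 + j))
         else 0)" for j
  define h where "h a = int m - int k - 1 - int a" for a
  have D: "Delta p (k + 2) = (\<Sum>j\<in>{1 - int (k+2)..0}. g j)"
    unfolding Delta_def td g_def using mk by simp
  have sub: "h ` {..m} \<subseteq> {1 - int (k+2)..0}" using mk by (auto simp: h_def)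
  have z: "g j = 0" if "j \<in> {1 - int (k+2)..0} - h ` {..m}" for j
  proof (rule ccontr)
    assume "g j \<noteq> 0"
    then have c1: "int m - int k - 1 - j \<ge> 0" and c2: "int k + 1 + j \<ge> 0"
      by (auto simp: g_def split: if_splits)
    define a where "a = nat (int m - int k - 1 - j)"
    have "a \<le> m" using c2 by (simp add: a_def)
    moreover have "j = h a" using c1 by (simp add: a_def h_def)
    ultimately show False using that by auto
  qed
  have "(\<Sum>j\<in>{1 - int (k+2)..0}. g j) = (\<Sum>j\<in>h ` {..m}. g j)"
    by (rule sum.mono_neutral_right) (use sub z in auto)
  also have "\<dots> = (\<Sum>a\<le>m. g (h a))"
    by (subst sum.reindex) (auto simp: inj_on_def h_def)
  also have "\<dots> = (\<Sum>a\<le>m. mcoeff p a (m - a) * rseq (a + (k + 1 - m)))"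
  proof (rule sum.cong)
    fix a assume a: "a \<in> {..m}"
    have e1: "nat (- h a) = a + (k + 1 - m)" using a mk by (simp add: h_def)
    have e2: "nat (int m + (1 - int (k+2)) - h a) = a" by (simp add: h_def)
    have e3: "nat (int (k+2) - 1 + h a) = m - a" using a by (simp add: h_def)
    show "g (h a) = mcoeff p a (m - a) * rseq (a + (k + 1 - m))"
      unfolding g_def e1 e2 e3 using a by (simp add: h_def mult.commute)
  qed simp
  finally show ?thesis using D by simp
qed

lemma Delta_F: "n \<le> k + 1 \<Longrightarrow> Delta (F n) (k + 2) = V n (k + 1 - n)"
  unfolding V_def
  by (subst Delta_hom[where m = n]) (auto simp: F_coeff tdeg_F split: if_splits)

lemma xpow1: "xpow 1 f = Xf * f"
  by (simp add: xpow_def Xf_def monom_altdef)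

lemma FG_form: "FG (2*i) = (F (Suc i), Zf * F i) \<and> FG (2*i+1) = (F (Suc i), Zf * (Zf * F i))"
proof (induction i)
  case 0
  have "Delta (F 1) (0 + 2) = V 1 0" by (subst Delta_F) auto
  then have d: "Delta (Xf + Zf) 2 = 0" using V_below[of 0 1] by (simp add: numeral_2_eq_2)
  show ?case using d by (simp add: step_def Let_def numeral_2_eq_2)
next
  case (Suc i)
  have e: "FG (2*i+1) = (F (Suc i), Zf * (Zf * F i))" using Suc.IH by blast
  have "Delta (F (Suc i)) ((2*i+1) + 2) = V (Suc i) (2*i+1 + 1 - Suc i)"
    by (rule Delta_F) simp
  then have d: "Delta (F (Suc i)) (2*i+1 + 2) = 1" using V_diag[of "Suc i"] by simp
  have t: "int (tdeg (Zf * (Zf * F i))) - int (tdeg (F (Suc i))) = 1"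
    by (simp add: tdeg_ZZF tdeg_F)
  have ev: "FG (2 * Suc i) = (F (Suc (Suc i)), Zf * F (Suc i))"
  proof -
    have "FG (2 * Suc i) = step (2*i+1) (FG (2*i+1))" by simp
    also have "\<dots> = (xpow 1 (F (Suc i)) + Zf * (Zf * F i), Zf * F (Suc i))"
      unfolding e step_def Let_def using d t by simp
    finally show ?thesis using xpow1[of "F (Suc i)"] by (simp del: FG.simps)
  qed
  have "Delta (F (Suc (Suc i))) ((2*i+2) + 2) = V (Suc (Suc i)) (2*i+2 + 1 - Suc (Suc i))"
    by (rule Delta_F) simp
  then have d2: "Delta (F (Suc (Suc i))) (2 * Suc i + 2) = 0" using V_below[of "Suc i" "Suc (Suc i)"] by simp
  have od: "FG (2 * Suc i + 1) = (F (Suc (Suc i)), Zf * (Zf * F (Suc i)))"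
  proof -
    have "FG (2 * Suc i + 1) = step (2 * Suc i) (FG (2 * Suc i))" by simp
    also have "\<dots> = (F (Suc (Suc i)), Zf * (Zf * F (Suc i)))"
      unfolding ev step_def Let_def using d2 by simp
    finally show ?thesis .
  qed
  show ?case using ev od by blast
qed

lemma vmul_assoc: "vmul (vmul v M) N = vmul v (mmul M N)"
  by (cases v; cases M; cases N) (simp add: vmul_def mmul_def algebra_simps)

lemma vmul_mid: "vmul v mid = v"
  by (cases v) (simp add: vmul_def mid_def)

lemma part1: "FG (Suc n) = vmul (FG n) (if even n then Emat else Umat)"
proof (cases "even n")
  case True
  then obtain i where n: "n = 2*i" by blast
  show ?thesis using FG_form[of i] True n by (simp del: FG.simps add: vmul_def Emat_def mult.commute)
next
  case False
  then obtain i where n: "n = 2*i+1" using oddE by blast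
  have "FG (Suc n) = FG (2 * Suc i)" using n by simp
  then show ?thesis using FG_form[of i] FG_form[of "Suc i"] False n
    by (simp del: FG.simps add: vmul_def Umat_def algebra_simps)
qed

theorem corollary4:
  shows "(\<forall>n. FG (Suc n) = vmul (FG n) (if even n then Emat else Umat))
       \<and> (\<forall>i\<ge>1. FG (2 * i) = vmul (vmul (Xf + Zf, Zf ^ 2) (mpow Pmat (i - 1))) Umat
               \<and> FG (2 * i + 1) = vmul (Xf + Zf, Zf ^ 2) (mpow Pmat i))"
proof -
  have odd_pow: "FG (2 * i + 1) = vmul (Xf + Zf, Zf ^ 2) (mpow Pmat i)" for i
  proof (induction i)
    case 0
    show ?case using FG_form[of 0] by (simp add: vmul_mid power2_eq_square)
  next
    case (Suc i)
    have "FG (2 * Suc i + 1) = FG (Suc (Suc (2*i+1)))" by simp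
    also have "\<dots> = vmul (vmul (FG (2*i+1)) Umat) Emat"
      using part1[of "Suc (2*i+1)"] part1[of "2*i+1"] by (simp del: FG.simps)
    also have "\<dots> = vmul (FG (2*i+1)) Pmat" by (simp add: vmul_assoc Pmat_def)
    also have "\<dots> = vmul (Xf + Zf, Zf ^ 2) (mpow Pmat (Suc i))" using Suc by (simp del: FG.simps add: vmul_assoc)
    finally show ?case .
  qed
  have even_pow: "FG (2 * i) = vmul (vmul (Xf + Zf, Zf ^ 2) (mpow Pmat (i - 1))) Umat" if "i \<ge> 1" for i
  proof -
    obtain j where i: "i = Suc j" using \<open>i \<ge> 1\<close> by (cases i) auto
    have "FG (2 * i) = FG (Suc (2*j+1))" using i by simp
    also have "\<dots> = vmul (FG (2*j+1)) Umat" using part1[of "2*j+1"] by (simp del: FG.simps)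
    finally show ?thesis using odd_pow[of j] i by (simp del: FG.simps)
  qed
  show ?thesis using part1 odd_pow even_pow by blast
qed

end
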